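(* Let $m,k$ be positive integers and let $G$ be a graph whose rank cardinality vector is $(1,m,k,1)$. Then the subgraph of $G$ induced by the vertices of corner rank 3 is connected.
   Context: All graphs are finite, nonempty, and reflexive (every vertex has a loop). $N[v]$ is the closed neighborhood of $v$ (including $v$). For distinct $v,w$, $w$ strictly corners $v$ if $N[v]\subsetneq N[w]$; $v$ is then a strict corner. Corner ranking: set $G^{(1)}=G$, $k=1$. If $G^{(k)}$ is a clique, give all its vertices rank $k$ and stop. Else if $G^{(k)}$ has no strict corners, give all its vertices rank $\infty$ and stop. Else give every strict corner of $G^{(k)}$ rank $k$, delete them to get $G^{(k+1)}$ (induced subgraph), increase $k$ and repeat. The corner rank of $G$ is the largest rank of a vertex; $X_k$ is the set of rank-$k$ vertices. The rank cardinality vector of a graph of finite corner rank $\alpha$ is $(x_\alpha,\dots,x_1)$ with $x_k=|X_k|$ (so here $|X_4|=1$, $|X_3|=m$, $|X_2|=k$, $|X_1|=1$). *)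

theory Defs
  imports Main
begin

text \<open>Induced subgraphs on S \<subseteq> V
use the same relation E restricted to S.\<close>

definition reflexive_graph :: "'a set \<Rightarrow> ('a \<Rightarrow> 'a \<Rightarrow> bool) \<Rightarrow> bool" where
  "reflexive_graph V E \<longleftrightarrow> finite V \<and> V \<noteq> {} \<and>
     (\<forall>v\<in>V. E v v) \<and> (\<forall>u\<in>V. \<forall>v\<in>V. E u v \<longrightarrow> E v u)"

definition cnbhd :: "('a \<Rightarrow> 'a \<Rightarrow> bool) \<Rightarrow> 'a set \<Rightarrow> 'a \<Rightarrow> 'a set" where
  "cnbhd E S v = {w \<in> S. E v w}"

definition strict_corner :: "('a \<Rightarrow> 'a \<Rightarrow> bool) \<Rightarrow> 'a set \<Rightarrow> 'a \<Rightarrow> bool" where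
  "strict_corner E S v \<longleftrightarrow> v \<in> S \<and>
     (\<exists>w\<in>S. w \<noteq> v \<and> cnbhd E S v \<subset> cnbhd E S w)"

definition is_clique :: "('a \<Rightarrow> 'a \<Rightarrow> bool) \<Rightarrow> 'a set \<Rightarrow> bool" where
  "is_clique E S \<longleftrightarrow> (\<forall>u\<in>S. \<forall>v\<in>S. E u v)"

text \<open>stage E V n is the vertex set of G^(n+1) (empty once the procedure has
stopped at a clique; unchanged forever once it stops with no strict corners).\<close>
fun stage :: "('a \<Rightarrow> 'a \<Rightarrow> bool) \<Rightarrow> 'a set \<Rightarrow> nat \<Rightarrow> 'a set" where
  "stage E V 0 = V"
| "stage E V (Suc n) =
     (let S = stage E V n in
      if is_clique E S then {} else {v \<in> S. \<not> strict_corner E S v})"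

text \<open>X_k, the set of vertices of (finite) rank k, for k \<ge> 1.\<close>
definition rank_set :: "('a \<Rightarrow> 'a \<Rightarrow> bool) \<Rightarrow> 'a set \<Rightarrow> nat \<Rightarrow> 'a set" where
  "rank_set E V k =
     (if k = 0 then {} else
      (let S = stage E V (k - 1) in
       if is_clique E S then S else {v \<in> S. strict_corner E S v}))"

text \<open>Every vertex receives a finite rank iff the procedure terminates at a clique,
i.e. some stage is empty.\<close>
definition finite_corner_rank :: "('a \<Rightarrow> 'a \<Rightarrow> bool) \<Rightarrow> 'a set \<Rightarrow> bool" where
  "finite_corner_rank E V \<longleftrightarrow> (\<exists>n. stage E V n = {})"

text \<open>The corner rank (largest rank of a vertex), for graphs of finite corner rank:
if G^(a) is the final clique then stage a is the first empty stage.\<close>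
definition corner_rank :: "('a \<Rightarrow> 'a \<Rightarrow> bool) \<Rightarrow> 'a set \<Rightarrow> nat" where
  "corner_rank E V = (LEAST n. stage E V n = {})"

definition connected_induced :: "('a \<Rightarrow> 'a \<Rightarrow> bool) \<Rightarrow> 'a set \<Rightarrow> bool" where
  "connected_induced E S \<longleftrightarrow> S \<noteq> {} \<and>
     (\<forall>u\<in>S. \<forall>v\<in>S. (u, v) \<in> {(x, y). x \<in> S \<and> y \<in> S \<and> E x y}\<^sup>*)"

end

theory Submission
  imports Defs
begin

lemma dom_noncorner:
  assumes "finite T" "strict_corner E T x"
  shows "\<exists>w\<in>T. \<not> strict_corner E T w \<and> cnbhd E T x \<subset> cnbhd E T w"
proof -
  define M where "M = {w\<in>T. cnbhd E T x \<subset> cnbhd E T w}"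
  define f where "f = (\<lambda>w. card (cnbhd E T w))"
  have fin: "\<And>w. finite (cnbhd E T w)" using assms(1) by (simp add: cnbhd_def)
  have "M \<noteq> {}" "finite M" using assms by (auto simp: strict_corner_def M_def)
  hence "Max (f ` M) \<in> f ` M" by (intro Max_in) auto
  then obtain w where w: "w \<in> M" "f w = Max (f ` M)" by auto
  have mx: "\<And>w'. w' \<in> M \<Longrightarrow> f w' \<le> f w" using w \<open>finite M\<close> by auto
  show ?thesis
  proof (intro bexI conjI)
    show "w \<in> T" "cnbhd E T x \<subset> cnbhd E T w" using w(1) by (auto simp: M_def)
    show "\<not> strict_corner E T w"
    proof
      assume "strict_corner E T w"
      then obtain w' where w': "w' \<in> T" "cnbhd E T w \<subset> cnbhd E T w'"
        by (auto simp: strict_corner_def)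
      hence "w' \<in> M" using w(1) by (auto simp: M_def)
      moreover have "f w < f w'" unfolding f_def using w'(2) fin by (simp add: psubset_card_mono)
      ultimately show False using mx by fastforce
    qed
  qed
qed

lemma cnbhd_insert: "cnbhd E (insert y S) v = (if E v y then insert y (cnbhd E S v) else cnbhd E S v)"
  by (auto simp: cnbhd_def)

lemma stage_subset: "stage E V n \<subseteq> V"
  by (induction n) (auto simp: Let_def)

lemma stage_Suc: "stage E V (Suc n) =
  (if is_clique E (stage E V n) then {} else {v \<in> stage E V n. \<not> strict_corner E (stage E V n) v})"
  by (simp add: Let_def)

theorem theorem3p24:
  fixes V :: "'a set" and E :: "'a \<Rightarrow> 'a \<Rightarrow> bool" and m k :: nat
  assumes "reflexive_graph V E"
    and "m > 0" and "k > 0"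
    and "finite_corner_rank E V"
    and "corner_rank E V = 4"
    and "card (rank_set E V 4) = 1"
    and "card (rank_set E V 3) = m"
    and "card (rank_set E V 2) = k"
    and "card (rank_set E V 1) = 1"
  shows "connected_induced E (rank_set E V 3)"
proof -
  have finV: "finite V" and refl: "\<And>v. v \<in> V \<Longrightarrow> E v v"
    and sym: "\<And>u v. u \<in> V \<Longrightarrow> v \<in> V \<Longrightarrow> E u v \<Longrightarrow> E v u"
    using assms(1) by (auto simp: reflexive_graph_def)
  define S1 where "S1 = stage E V 1"
  define S2 where "S2 = stage E V 2"
  define S3 where "S3 = stage E V 3"
  have S1V: "S1 \<subseteq> V" and S2V: "S2 \<subseteq> V" and S3V: "S3 \<subseteq> V"
    unfolding S1_def S2_def S3_def by (rule stage_subset)+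
  have fin1: "finite S1" and fin2: "finite S2" and fin3: "finite S3"
    using S1V S2V S3V finV by (auto intro: finite_subset)
  have ex: "\<exists>n. stage E V n = {}" using assms(4) by (simp add: finite_corner_rank_def)
  have st4: "stage E V 4 = {}"
    using LeastI_ex[OF ex] assms(5) by (simp add: corner_rank_def)
  have ne: "\<And>n. n < 4 \<Longrightarrow> stage E V n \<noteq> {}"
    using not_less_Least assms(5) by (metis corner_rank_def)
  have S1ne: "S1 \<noteq> {}" and S2ne: "S2 \<noteq> {}" and S3ne: "S3 \<noteq> {}"
    using ne[of 1] ne[of 2] ne[of 3] by (auto simp: S1_def S2_def S3_def)
  have n2: "(2::nat) = Suc 1" and n3: "(3::nat) = Suc 2" and n4: "(4::nat) = Suc 3" by simp_all
  have e1: "S1 = (if is_clique E V then {} else {v \<in> V. \<not> strict_corner E V v})"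
    using stage_Suc[of E V 0] by (simp add: S1_def)
  have e2: "S2 = (if is_clique E S1 then {} else {v \<in> S1. \<not> strict_corner E S1 v})"
    unfolding S1_def S2_def n2 by (rule stage_Suc)
  have e3: "S3 = (if is_clique E S2 then {} else {v \<in> S2. \<not> strict_corner E S2 v})"
    unfolding S3_def S2_def n3 by (rule stage_Suc)
  have e4: "stage E V 4 = (if is_clique E S3 then {} else {v \<in> S3. \<not> strict_corner E S3 v})"
    unfolding S3_def n4 by (rule stage_Suc)
  have ncl0: "\<not> is_clique E V" using S1ne e1 by auto
  have ncl1: "\<not> is_clique E S1" using S2ne e2 by auto
  have ncl2: "\<not> is_clique E S2" using S3ne e3 by auto
  have S1eq: "S1 = {v \<in> V. \<not> strict_corner E V v}" using e1 ncl0 by simp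
  have S2eq: "S2 = {v \<in> S1. \<not> strict_corner E S1 v}" using e2 ncl1 by simp
  have S3eq: "S3 = {v \<in> S2. \<not> strict_corner E S2 v}" using e3 ncl2 by simp
  have cl3: "is_clique E S3"
  proof (rule ccontr)
    assume "\<not> is_clique E S3"
    hence "{v \<in> S3. \<not> strict_corner E S3 v} = {}"
      using st4 e4 by simp
    moreover obtain x where "x \<in> S3" using S3ne by auto
    ultimately show False using dom_noncorner[OF fin3, of E x] by auto
  qed
  have R4: "rank_set E V 4 = S3" using cl3 by (simp add: Let_def rank_set_def S3_def)
  define X3 where "X3 = {v \<in> S2. strict_corner E S2 v}"
  define X2 where "X2 = {v \<in> S1. strict_corner E S1 v}"
  define Y where "Y = {v \<in> V. strict_corner E V v}"
  have R3: "rank_set E V 3 = X3" using ncl2 by (simp add: Let_def rank_set_def S2_def X3_def)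
  have R1: "rank_set E V 1 = Y" using ncl0 by (simp add: Let_def rank_set_def Y_def)
  obtain z where z: "S3 = {z}" using assms(6) R4 card_1_singletonE by metis
  obtain y where y: "Y = {y}" using assms(9) R1 card_1_singletonE by metis
  have X3ne: "X3 \<noteq> {}" using assms(2,7) R3 by auto
  have zS2: "z \<in> S2" and zX3: "z \<notin> X3" and zV: "z \<in> V"
    using z S3eq S2V by (auto simp: X3_def)
  have S2u: "S2 = insert z X3" using z S3eq by (auto simp: X3_def)
  have X3S2: "X3 \<subseteq> S2" by (auto simp: X3_def)
  have S1u: "S1 = S2 \<union> X2" using S2eq by (auto simp: X2_def)
  have X2S2: "X2 \<inter> S2 = {}" using S2eq by (auto simp: X2_def)
  have yS1: "y \<notin> S1" and yV: "y \<in> V" using y S1eq by (auto simp: Y_def)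
  have Vu: "V = insert y S1" using y S1eq by (auto simp: Y_def)
  have X3V: "X3 \<subseteq> V" and X2V: "X2 \<subseteq> V" using X3S2 S2V S1u S1V by auto
  have F1: "cnbhd E S2 x \<subset> cnbhd E S2 z" if "x \<in> X3" for x
  proof -
    from that have "strict_corner E S2 x" by (simp add: X3_def)
    from dom_noncorner[OF fin2 this] obtain w where
      "w \<in> S2" "\<not> strict_corner E S2 w" "cnbhd E S2 x \<subset> cnbhd E S2 w" by blast
    moreover have "w = z" using calculation z S3eq by auto
    ultimately show ?thesis by simp
  qed
  have F2: "\<exists>p\<in>X2. E x p \<and> \<not> E z p" if x: "x \<in> X3" for x
  proof (rule ccontr)
    assume H: "\<not> (\<exists>p\<in>X2. E x p \<and> \<not> E z p)"
    have xS1: "x \<in> S1" using x X3S2 S1u by auto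
    hence nsc: "\<not> strict_corner E S1 x" using x X3S2 S2eq by auto
    have f1: "cnbhd E S2 x \<subset> cnbhd E S2 z" using F1[OF x] .
    then obtain q where q: "q \<in> S2" "E z q" "\<not> E x q" by (auto simp: cnbhd_def)
    have "cnbhd E S1 x \<subseteq> cnbhd E S1 z"
    proof
      fix p assume p: "p \<in> cnbhd E S1 x"
      show "p \<in> cnbhd E S1 z"
      proof (cases "p \<in> S2")
        case True thus ?thesis using p f1 by (auto simp: cnbhd_def)
      next
        case False thus ?thesis using p H S1u by (auto simp: cnbhd_def)
      qed
    qed
    moreover have "q \<in> cnbhd E S1 z - cnbhd E S1 x" using q S1u by (auto simp: cnbhd_def)
    ultimately have "cnbhd E S1 x \<subset> cnbhd E S1 z" by blast
    moreover have "z \<in> S1" "z \<noteq> x" using zS2 S1u zX3 x by auto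
    ultimately show False using nsc xS1 by (auto simp: strict_corner_def)
  qed
  have F3: "\<exists>w\<in>S2. cnbhd E S1 p \<subset> cnbhd E S1 w \<and> E p y \<and> \<not> E w y" if p: "p \<in> X2" for p
  proof -
    from p have "strict_corner E S1 p" by (simp add: X2_def)
    from dom_noncorner[OF fin1 this] obtain w where
      w: "w \<in> S1" "\<not> strict_corner E S1 w" "cnbhd E S1 p \<subset> cnbhd E S1 w" by blast
    have wS2: "w \<in> S2" using w S2eq by auto
    have pS1: "p \<in> S1" using p by (simp add: X2_def)
    hence nsc: "\<not> strict_corner E V p" using S1eq by auto
    have wp: "w \<noteq> p" using w(3) by auto
    have nyw: "y \<notin> cnbhd E S1 w" using yS1 by (auto simp: cnbhd_def)
    have "E p y \<and> \<not> E w y"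
    proof (rule ccontr)
      assume H: "\<not> (E p y \<and> \<not> E w y)"
      have "cnbhd E V p \<subset> cnbhd E V w"
      proof (cases "E p y")
        case False
        thus ?thesis using w(3) unfolding Vu cnbhd_insert by auto
      next
        case True
        hence "E w y" using H by simp
        thus ?thesis using w(3) True nyw unfolding Vu cnbhd_insert by auto
      qed
      thus False using nsc pS1 w(1) wp S1V by (auto simp: strict_corner_def Vu)
    qed
    thus ?thesis using wS2 w(3) by blast
  qed
  have F4: "\<exists>w0\<in>S1. cnbhd E V y \<subset> cnbhd E V w0"
  proof -
    have "strict_corner E V y" using y by (auto simp: Y_def)
    from dom_noncorner[OF finV this] show ?thesis using S1eq by auto
  qed
  have G: "\<exists>p w. p \<in> X2 \<and> w \<in> X3 \<and> \<not> E z p \<and> cnbhd E S1 p \<subset> cnbhd E S1 w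
      \<and> E p y \<and> E w t" if t: "t \<in> X3" for t
  proof -
    obtain p where p: "p \<in> X2" "E t p" "\<not> E z p" using F2[OF t] by blast
    obtain w where w: "w \<in> S2" "cnbhd E S1 p \<subset> cnbhd E S1 w" "E p y" "\<not> E w y"
      using F3[OF p(1)] by blast
    have pS1: "p \<in> S1" using p S1u by auto
    have tS1: "t \<in> S1" using t X3S2 S1u by auto
    have "E p t" using sym[of t p] p t X3V X2V by auto
    hence "t \<in> cnbhd E S1 p" using tS1 by (simp add: cnbhd_def)
    hence Ewt: "E w t" using w(2) by (auto simp: cnbhd_def)
    have "p \<in> cnbhd E S1 p" using pS1 refl S1V by (auto simp: cnbhd_def)
    hence "E w p" using w(2) by (auto simp: cnbhd_def)
    hence "w \<noteq> z" using p(3) by auto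
    hence "w \<in> X3" using w(1) S2u by auto
    thus ?thesis using p w Ewt by blast
  qed
  define R where "R = {(x, y). x \<in> X3 \<and> y \<in> X3 \<and> E x y}"
  show ?thesis
  proof (rule ccontr)
    assume "\<not> connected_induced E (rank_set E V 3)"
    then obtain u v where uv: "u \<in> X3" "v \<in> X3" "(u, v) \<notin> R\<^sup>*"
      using X3ne R3 by (auto simp: connected_induced_def R_def)
    define A where "A = {x. (u, x) \<in> R\<^sup>*}"
    have clos: "x' \<in> A" if "x \<in> A" "x \<in> X3" "x' \<in> X3" "E x x'" for x x'
      using that by (auto simp: A_def R_def intro: rtrancl_into_rtrancl)
    have symE: "E b a" if "E a b" "a \<in> V" "b \<in> V" for a b using sym that by blast
    have uA: "u \<in> A" by (simp add: A_def)
    have vA: "v \<notin> A" using uv by (simp add: A_def)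
    obtain pa wa where a: "pa \<in> X2" "wa \<in> X3" "\<not> E z pa" "cnbhd E S1 pa \<subset> cnbhd E S1 wa"
      "E pa y" "E wa u" using G[OF uv(1)] by blast
    obtain pb wb where b: "pb \<in> X2" "wb \<in> X3" "\<not> E z pb" "cnbhd E S1 pb \<subset> cnbhd E S1 wb"
      "E pb y" "E wb v" using G[OF uv(2)] by blast
    have waA: "wa \<in> A" using clos[OF uA uv(1) a(2)] symE[OF a(6)] a(2) uv(1) X3V by auto
    have wbA: "wb \<notin> A" using clos[of wb v] b(2,6) uv(2) vA by auto
    obtain w0 where w0: "w0 \<in> S1" "cnbhd E V y \<subset> cnbhd E V w0" using F4 by blast
    have w0V: "w0 \<in> V" using w0 S1V by auto
    have paV: "pa \<in> V" and pbV: "pb \<in> V" using a(1) b(1) X2V by auto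
    have "pa \<in> cnbhd E V y" using symE[OF a(5) paV yV] paV by (simp add: cnbhd_def)
    hence w0pa: "E w0 pa" using w0(2) by (auto simp: cnbhd_def)
    have "pb \<in> cnbhd E V y" using symE[OF b(5) pbV yV] pbV by (simp add: cnbhd_def)
    hence w0pb: "E w0 pb" using w0(2) by (auto simp: cnbhd_def)
    have inA: "x \<in> A" if x: "x \<in> X3" "x \<in> S1" "E x pa" for x
    proof -
      have "x \<in> cnbhd E S1 pa" using symE[OF x(3)] x X3V paV by (auto simp: cnbhd_def)
      hence "E wa x" using a(4) by (auto simp: cnbhd_def)
      thus ?thesis using clos[OF waA a(2) x(1)] by simp
    qed
    have inB: "wb \<in> A" if x: "x \<in> A" "x \<in> X3" "x \<in> S1" "E x pb" for x
    proof -
      have "x \<in> cnbhd E S1 pb" using symE[OF x(4)] x X3V pbV by (auto simp: cnbhd_def)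
      hence "E wb x" using b(4) by (auto simp: cnbhd_def)
      hence "E x wb" using symE x(2) b(2) X3V by auto
      thus ?thesis using clos[OF x(1) x(2) b(2)] by simp
    qed
    show False
    proof (cases "w0 \<in> S2")
      case True
      hence "w0 \<noteq> z" using w0pa a(3) by auto
      hence "w0 \<in> X3" using True S2u by auto
      thus False using inA[OF _ w0(1) w0pa] inB[OF _ _ w0(1) w0pb] wbA by auto
    next
      case False
      hence "w0 \<in> X2" using w0(1) S1u by auto
      then obtain w where w: "w \<in> S2" "cnbhd E S1 w0 \<subset> cnbhd E S1 w" using F3 by blast
      have paS1: "pa \<in> S1" and pbS1: "pb \<in> S1" using a(1) b(1) S1u by auto
      have "pa \<in> cnbhd E S1 w0" using w0pa paS1 by (simp add: cnbhd_def)
      hence wpa: "E w pa" using w(2) by (auto simp: cnbhd_def)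
      have "pb \<in> cnbhd E S1 w0" using w0pb pbS1 by (simp add: cnbhd_def)
      hence wpb: "E w pb" using w(2) by (auto simp: cnbhd_def)
      have "w \<noteq> z" using wpa a(3) by auto
      hence wX3: "w \<in> X3" using w(1) S2u by auto
      have wS1: "w \<in> S1" using w(1) S1u by auto
      show False using inA[OF wX3 wS1 wpa] inB[OF _ wX3 wS1 wpb] wbA by auto
    qed
  qed
qed

end
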